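(* Let $r\ge1$, let $\mathbf{a}=\langle a_1,\dots,a_s\rangle$ be an integer vector with $s\le r+1$, and let $\mathbf{b}=\langle b_1\rangle$ with $b_1=a_1+\cdots+a_s$. Put $\delta=a_1\varepsilon_1+\cdots+a_s\varepsilon_s-b_1\varepsilon_{r+1}\in\mathbb{Z}^{r+1}$. Then the map sending a juggling sequence $S\in\mathrm{JS}(\mathbf{a},\mathbf{b},r)$ to the multiset of positive roots $\{\varepsilon_i-\varepsilon_{i+j}\}$, with $\varepsilon_i-\varepsilon_{i+j}$ taken with multiplicity equal to the number of throws at time $i$ to height $j$ in $S$, is a bijection from $\mathrm{JS}(\mathbf{a},\mathbf{b},r)$ onto $P_{A_r}(\delta)$.
   Context: A (magic) juggling state is a finitely supported integer vector $\mathbf{s}=\langle s_1,s_2,\dots\rangle$ indexed by heights $1,2,\dots$ (trailing zeros omitted). A juggling sequence of length $n$ from $\mathbf{a}$ to $\mathbf{b}$ is a sequence $(\mathbf{s}_0,\dots,\mathbf{s}_n)$ with $\mathbf{s}_0=\mathbf{a}$, $\mathbf{s}_n=\mathbf{b}$, such that for each $1\le i\le n$ there are nonnegative integers $c^{(i)}_1,c^{(i)}_2,\dots$ (finitely many nonzero) with $\sum_k c^{(i)}_k=(\mathbf{s}_{i-1})_1$ and $(\mathbf{s}_i)_k=(\mathbf{s}_{i-1})_{k+1}+c^{(i)}_k$ for all $k\ge1$; $c^{(i)}_j$ is the number of throws at time $i$ to height $j$. $\mathrm{JS}(\mathbf{a},\mathbf{b},n)$ denotes the set of these (no hand capacity constraint).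 For $r\ge1$, $\varepsilon_1,\dots,\varepsilon_{r+1}$ is the standard basis of $\mathbb{R}^{r+1}$ and $\Phi^+_{A_r}=\{\varepsilon_i-\varepsilon_j:1\le i<j\le r+1\}$. For $\mu\in\mathbb{Z}^{r+1}$ and $\Lambda\subseteq\Phi^+_{A_r}$, $P_\Lambda(\mu)$ is the set of finite multisets of elements of $\Lambda$ whose sum is $\mu$ (the empty multiset is a partition of $0$), $K_\Lambda(\mu)=|P_\Lambda(\mu)|$; for $\Lambda=\Phi^+_{A_r}$ we write $P_{A_r}$ and $K_{A_r}$ (Kostant's partition function). *)

theory Defs
  imports Main "HOL-Library.Multiset" "HOL-Library.Function_Algebras"
begin

text \<open>Juggling states: finitely supported integer vectors indexed by heights 1,2,...;
  represented as functions nat => int whose value at index 0 is 0.\<close>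

definition juggling_state :: "(nat \<Rightarrow> int) \<Rightarrow> bool" where
  "juggling_state s \<longleftrightarrow> s 0 = 0 \<and> finite {k. s k \<noteq> 0}"

text \<open>One step of a juggling sequence from state s to state t with throw vector c
  (c j = number of throws to height j; index 0 unused).\<close>

definition juggling_step :: "(nat \<Rightarrow> int) \<Rightarrow> (nat \<Rightarrow> nat) \<Rightarrow> (nat \<Rightarrow> int) \<Rightarrow> bool" where
  "juggling_step s c t \<longleftrightarrow>
     c 0 = 0 \<and> finite {k. c k \<noteq> 0} \<and>
     (\<Sum>k\<in>{k. c k \<noteq> 0}. int (c k)) = s 1 \<and>
     (\<forall>k\<ge>1. t k = s (k + 1) + int (c k))"

definition JS :: "(nat \<Rightarrow> int) \<Rightarrow> (nat \<Rightarrow> int) \<Rightarrow> nat \<Rightarrow> (nat \<Rightarrow> int) list set" where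
  "JS a b n = {S. length S = n + 1 \<and> S ! 0 = a \<and> S ! n = b \<and>
      (\<forall>i<length S. juggling_state (S ! i)) \<and>
      (\<forall>i\<in>{1..n}. \<exists>c. juggling_step (S ! (i - 1)) c (S ! i))}"

definition throws :: "(nat \<Rightarrow> int) list \<Rightarrow> nat \<Rightarrow> nat \<Rightarrow> nat" where
  "throws S i j = nat ((S ! i) j - (S ! (i - 1)) (j + 1))"

text \<open>Vectors in Z^(r+1): functions nat => int (coordinates 1..r+1, zero elsewhere).\<close>

definition eps :: "nat \<Rightarrow> nat \<Rightarrow> int" where
  "eps i = (\<lambda>k. if k = i then 1 else 0)"

definition scale_vec :: "int \<Rightarrow> (nat \<Rightarrow> int) \<Rightarrow> nat \<Rightarrow> int" where
  "scale_vec c v = (\<lambda>k. c * v k)"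

definition pos_roots_A :: "nat \<Rightarrow> (nat \<Rightarrow> int) set" where
  "pos_roots_A r = {eps i - eps j | i j. 1 \<le> i \<and> i < j \<and> j \<le> r + 1}"

definition vector_partitions :: "(nat \<Rightarrow> int) set \<Rightarrow> (nat \<Rightarrow> int) \<Rightarrow> (nat \<Rightarrow> int) multiset set" where
  "vector_partitions \<Lambda> \<mu> = {M. set_mset M \<subseteq> \<Lambda> \<and> sum_mset M = \<mu>}"

abbreviation P_A :: "nat \<Rightarrow> (nat \<Rightarrow> int) \<Rightarrow> (nat \<Rightarrow> int) multiset set" where
  "P_A r \<equiv> vector_partitions (pos_roots_A r)"

definition js_to_roots :: "(nat \<Rightarrow> int) list \<Rightarrow> (nat \<Rightarrow> int) multiset" where
  "js_to_roots S = (\<Sum>i\<in>{1..length S - 1}. \<Sum>j\<in>{j. 1 \<le> j \<and> throws S i j \<noteq> 0}.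
      replicate_mset (throws S i j) (eps i - eps (i + j)))"

end

theory Submission imports Defs begin

definition root :: "nat \<Rightarrow> nat \<Rightarrow> nat \<Rightarrow> int" where
  "root i j = eps i - eps (i + j)"

definition RR :: "nat \<Rightarrow> (nat \<Rightarrow> nat \<Rightarrow> nat) \<Rightarrow> (nat \<Rightarrow> int) multiset" where
  "RR r c = (\<Sum>i\<in>{1..r}. \<Sum>j\<in>{1..r}. replicate_mset (c i j) (root i j))"

lemma eps_diff_inj:
  assumes "i \<noteq> i'" "p \<noteq> q" "eps i - eps i' = eps p - eps q"
  shows "i = p \<and> i' = q"
proof -
  have 1: "eps i i - eps i' i = eps p i - eps q i" using assms(3) by (metis minus_apply)
  have 2: "eps i i' - eps i' i' = eps p i' - eps q i'" using assms(3) by (metis minus_apply)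
  show ?thesis using 1 2 assms(1,2) by (auto simp: eps_def split: if_splits)
qed

lemma root_inj: "j \<ge> 1 \<Longrightarrow> q \<ge> 1 \<Longrightarrow> root i j = root p q \<Longrightarrow> i = p \<and> j = q"
  unfolding root_def using eps_diff_inj[of i "i+j" p "p+q"] by auto

lemma count_sum_mset: "finite A \<Longrightarrow> count (\<Sum>i\<in>A. f i) x = (\<Sum>i\<in>A. count (f i) x)"
  by (induction A rule: finite_induct) auto

lemma count_RR: "count (RR r c) x = (\<Sum>i\<in>{1..r}. \<Sum>j\<in>{1..r}. if x = root i j then c i j else 0)"
  unfolding RR_def by (simp add: count_sum_mset)

lemma count_RR_root:
  assumes "p \<in> {1..r}" "q \<in> {1..r}"
  shows "count (RR r c) (root p q) = c p q"
proof -
  have "count (RR r c) (root p q) = (\<Sum>i\<in>{1..r}. \<Sum>j\<in>{1..r}. if i = p \<and> j = q then c i j else 0)"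
    unfolding count_RR
    apply (rule sum.cong, simp, rule sum.cong, simp)
    subgoal for i j
    proof -
      assume h: "i \<in> {1..r}" "j \<in> {1..r}"
      have "root p q = root i j \<longleftrightarrow> i = p \<and> j = q"
        using root_inj[of q j p i] assms h by auto
      then show ?thesis by simp
    qed
    done
  also have "\<dots> = (\<Sum>i\<in>{1..r}. if i = p then c p q else 0)"
    apply (rule sum.cong, simp)
    using assms by (auto simp: sum.delta)
  also have "\<dots> = c p q" using assms by (simp add: sum.delta)
  finally show ?thesis .
qed

lemma sum_mset_apply: "sum_mset M m = sum_mset (image_mset (\<lambda>f. f m) M)"
  by (induction M) auto

lemma sum_mset_sum_fun: "finite A \<Longrightarrow> (sum_mset (\<Sum>i\<in>A. f i) :: nat \<Rightarrow> int) m = (\<Sum>i\<in>A. sum_mset (f i) m)"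
  by (induction A rule: finite_induct) auto

lemma sum_mset_rep_apply: "(sum_mset (replicate_mset n x) :: nat \<Rightarrow> int) m = int n * x m"
  by (induction n) (auto simp: algebra_simps)

lemma sum_RR: "sum_mset (RR r c) m = (\<Sum>i\<in>{1..r}. \<Sum>j\<in>{1..r}. int (c i j) * (eps i m - eps (i+j) m))"
  unfolding RR_def by (simp add: sum_mset_sum_fun sum_mset_rep_apply root_def)

lemma sum_RR_eval: "sum_mset (RR r c) m =
   (if m \<in> {1..r} then (\<Sum>j\<in>{1..r}. int (c m j)) else 0)
   - (\<Sum>i\<in>{1..r}. if i < m \<and> m - i \<le> r then int (c i (m - i)) else 0)"
proof -
  have A: "(\<Sum>i\<in>{1..r}. \<Sum>j\<in>{1..r}. int (c i j) * eps i m) =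
     (if m \<in> {1..r} then (\<Sum>j\<in>{1..r}. int (c m j)) else 0)"
  proof -
    have "(\<Sum>i\<in>{1..r}. \<Sum>j\<in>{1..r}. int (c i j) * eps i m) =
       (\<Sum>i\<in>{1..r}. if i = m then (\<Sum>j\<in>{1..r}. int (c m j)) else 0)"
      by (rule sum.cong) (auto simp: eps_def)
    then show ?thesis by (simp add: sum.delta')
  qed
  have B: "(\<Sum>j\<in>{1..r}. int (c i j) * eps (i+j) m) =
     (if i < m \<and> m - i \<le> r then int (c i (m - i)) else 0)" for i
  proof -
    have "(\<Sum>j\<in>{1..r}. int (c i j) * eps (i+j) m) =
       (\<Sum>j\<in>{1..r}. if j = m - i \<and> i < m then int (c i (m-i)) else 0)"
      by (rule sum.cong) (auto simp: eps_def)
    also have "\<dots> = (\<Sum>j\<in>{1..r}. if j = m - i then (if i < m then int (c i (m-i)) else 0) else 0)"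
      by (rule sum.cong) auto
    also have "\<dots> = (if i < m \<and> m - i \<le> r then int (c i (m - i)) else 0)"
      by (simp add: sum.delta, auto)
    finally show ?thesis .
  qed
  show ?thesis
    unfolding sum_RR using A B
    by (simp add: right_diff_distrib sum_subtractf)
qed

lemma closed_form:
  fixes f :: "nat \<Rightarrow> nat \<Rightarrow> int"
  assumes "\<And>t k. t < n \<Longrightarrow> k \<ge> 1 \<Longrightarrow> f (Suc t) k = f t (k + 1) + int (c (Suc t) k)"
  shows "t \<le> n \<Longrightarrow> k \<ge> 1 \<Longrightarrow> f t k = f 0 (k + t) + (\<Sum>i\<in>{1..t}. int (c i (k + t - i)))"
proof (induction t arbitrary: k)
  case 0
  then show ?case by simp
next
  case (Suc t)
  have "f (Suc t) k = f t (k + 1) + int (c (Suc t) k)" using assms Suc.prems by simp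
  also have "\<dots> = f 0 (k + 1 + t) + (\<Sum>i\<in>{1..t}. int (c i (k + 1 + t - i))) + int (c (Suc t) k)"
    using Suc by simp
  also have "\<dots> = f 0 (k + Suc t) + (\<Sum>i\<in>{1..Suc t}. int (c i (k + Suc t - i)))"
    by (simp add: sum.cl_ivl_Suc)
  finally show ?case .
qed

lemma sum_fun_apply: "finite A \<Longrightarrow> (\<Sum>i\<in>A. f i) (m::nat) = (\<Sum>i\<in>A. (f i m :: int))"
  by (induction A rule: finite_induct) auto

lemma sum_nz: "sum f A \<noteq> 0 \<Longrightarrow> \<exists>i\<in>A. f i \<noteq> 0"
proof (rule ccontr)
  assume a: "sum f A \<noteq> 0" "\<not> (\<exists>i\<in>A. f i \<noteq> 0)"
  then have "\<forall>i\<in>A. f i = 0" by simp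
  then have "sum f A = 0" by (rule sum.neutral)
  with a show False by simp
qed

lemma sum_shift:
  fixes f :: "nat \<Rightarrow> nat \<Rightarrow> int"
  assumes "1 \<le> m" "m \<le> r + 1"
  shows "(\<Sum>i\<in>{1..r}. if i < m \<and> m - i \<le> r then f i (m - i) else 0) = (\<Sum>i\<in>{1..m-1}. f i (m - i))"
proof (rule sum.mono_neutral_cong_right)
  show "{1..m-1} \<subseteq> {1..r}" using assms by auto
  show "\<forall>i\<in>{1..r} - {1..m - 1}. (if i < m \<and> m - i \<le> r then f i (m - i) else 0) = 0" by auto
  show "\<And>x. x \<in> {1..m - 1} \<Longrightarrow> (if x < m \<and> m - x \<le> r then f x (m - x) else 0) = f x (m - x)"
    using assms by auto
qed simp

primrec st :: "(nat \<Rightarrow> int) \<Rightarrow> (nat \<Rightarrow> nat \<Rightarrow> nat) \<Rightarrow> nat \<Rightarrow> nat \<Rightarrow> int" where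
  "st a c 0 = a"
| "st a c (Suc t) = (\<lambda>k. if k = 0 then 0 else st a c t (k + 1) + int (c (Suc t) k))"

locale jug =
  fixes r :: nat and a b :: "nat \<Rightarrow> int"
  assumes r1: "r \<ge> 1" and a0: "a 0 = 0" and aZ: "\<forall>k > r + 1. a k = 0"
    and bdef: "b = (\<lambda>k. if k = 1 then (\<Sum>i\<in>{1..r+1}. a i) else 0)"
begin

definition "delta = (\<Sum>i\<in>{1..r+1}. scale_vec (a i) (eps i)) - scale_vec (\<Sum>i\<in>{1..r+1}. a i) (eps (r + 1))"

lemma delta_eval: "delta m = a m - (if m = r + 1 then (\<Sum>i\<in>{1..r+1}. a i) else 0)"
proof -
  have "(\<Sum>i\<in>{1..r+1}. scale_vec (a i) (eps i)) m = (\<Sum>i\<in>{1..r+1}. if m = i then a m else 0)"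
    unfolding sum_fun_apply[OF finite_atLeastAtMost] scale_vec_def eps_def by (rule sum.cong) auto
  also have "\<dots> = a m" using a0 aZ by (cases "m = 0"; cases "m \<in> {1..r+1}") (auto simp: sum.delta)
  finally show ?thesis unfolding delta_def by (simp add: scale_vec_def eps_def)
qed

context
  fixes S assumes S: "S \<in> JS a b r"
begin

lemma js_len: "length S = r + 1" and js0: "S ! 0 = a" and jsr: "S ! r = b"
  and js_state: "i \<le> r \<Longrightarrow> juggling_state (S ! i)"
  using S by (auto simp: JS_def)

lemma js_c: assumes "i \<in> {1..r}" obtains c where "juggling_step (S ! (i - 1)) c (S ! i)"
proof -
  have "\<forall>i\<in>{1..r}. \<exists>c. juggling_step (S ! (i - 1)) c (S ! i)" using S by (simp add: JS_def)
  then have "\<exists>c. juggling_step (S ! (i - 1)) c (S ! i)" using assms by blast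
  then show ?thesis using that by blast
qed

lemma js_step: "i \<in> {1..r} \<Longrightarrow> k \<ge> 1 \<Longrightarrow> (S ! i) k = (S ! (i - 1)) (k + 1) + int (throws S i k)"
  by (erule js_c) (auto simp: juggling_step_def throws_def)

lemma js_closed: "t \<le> r \<Longrightarrow> k \<ge> 1 \<Longrightarrow> (S ! t) k = a (k + t) + (\<Sum>i\<in>{1..t}. int (throws S i (k + t - i)))"
proof -
  assume tk: "t \<le> r" "k \<ge> 1"
  have h: "(S ! Suc t') k' = (S ! t') (k' + 1) + int (throws S (Suc t') k')" if "t' < r" "k' \<ge> 1" for t' k'
  proof -
    have "Suc t' \<in> {1..r}" using that by simp
    from js_step[OF this that(2)] show ?thesis by simp
  qed
  show ?thesis using closed_form[of r "\<lambda>t. S ! t" "throws S", OF h tk] js0 by simp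
qed

lemma js_vanish: assumes "i \<in> {1..r}" "j \<ge> 1" "r + 1 < i + j" shows "throws S i j = 0"
proof -
  define k where "k = i + j - r"
  have k: "k \<ge> 2" "k + r - i = j" "k + r > r + 1" using assms by (auto simp: k_def)
  have "0 = (S ! r) k" using jsr k by (simp add: bdef)
  also have "\<dots> = (\<Sum>i\<in>{1..r}. int (throws S i (k + r - i)))"
    using js_closed[of r k] k aZ by simp
  finally have "(\<Sum>i\<in>{1..r}. int (throws S i (k + r - i))) = 0" by simp
  then have "\<forall>i'\<in>{1..r}. int (throws S i' (k + r - i')) = 0"
    by (subst (asm) sum_nonneg_eq_0_iff) auto
  then show ?thesis using assms(1) k by force
qed

lemma js_sum: assumes "i \<in> {1..r}" shows "(\<Sum>j\<in>{1..r}. int (throws S i j)) = (S ! (i - 1)) 1"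
proof -
  obtain c where c: "juggling_step (S ! (i - 1)) c (S ! i)" by (rule js_c[OF assms])
  have ct: "k \<ge> 1 \<Longrightarrow> c k = throws S i k" for k using c by (auto simp: juggling_step_def throws_def)
  have cz: "c k = 0" if "k \<notin> {1..r}" for k
  proof (cases "k = 0")
    case True then show ?thesis using c by (simp add: juggling_step_def)
  next
    case False
    then have "k \<ge> 1" "r + 1 < i + k" using that assms by auto
    then show ?thesis using ct[of k] js_vanish[of i k] assms by simp
  qed
  have "(S ! (i - 1)) 1 = (\<Sum>k\<in>{k. c k \<noteq> 0}. int (c k))" using c by (simp add: juggling_step_def)
  also have "\<dots> = (\<Sum>k\<in>{1..r}. int (c k))"
  proof (rule sum.mono_neutral_left)
    show "{k. c k \<noteq> 0} \<subseteq> {1..r}"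
    proof
      fix k assume "k \<in> {k. c k \<noteq> 0}"
      then show "k \<in> {1..r}" using cz[of k] by auto
    qed
  qed simp_all
  also have "\<dots> = (\<Sum>j\<in>{1..r}. int (throws S i j))"
  proof (rule sum.cong)
    fix j assume "j \<in> {1..r}"
    then show "int (c j) = int (throws S i j)" using ct[of j] by simp
  qed simp
  finally show ?thesis by (rule sym)
qed

lemma js_roots: "js_to_roots S = RR r (throws S)"
  unfolding js_to_roots_def RR_def js_len
proof (rule sum.cong)
  fix i assume i: "i \<in> {1..r}"
  show "(\<Sum>j\<in>{j. 1 \<le> j \<and> throws S i j \<noteq> 0}. replicate_mset (throws S i j) (eps i - eps (i + j))) =
        (\<Sum>j\<in>{1..r}. replicate_mset (throws S i j) (root i j))"
    unfolding root_def
  proof (rule sum.mono_neutral_left)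
    show "{j. 1 \<le> j \<and> throws S i j \<noteq> 0} \<subseteq> {1..r}"
    proof
      fix j assume j: "j \<in> {j. 1 \<le> j \<and> throws S i j \<noteq> 0}"
      show "j \<in> {1..r}"
      proof (rule ccontr)
        assume "j \<notin> {1..r}"
        then have "r + 1 < i + j" using i j by auto
        then show False using js_vanish[of i j] i j by auto
      qed
    qed
  qed auto
qed simp


lemma js_mem: "js_to_roots S \<in> P_A r delta"
proof -
  let ?c = "throws S"
  have sub: "set_mset (RR r ?c) \<subseteq> pos_roots_A r"
  proof
    fix x assume "x \<in># RR r ?c"
    then have "count (RR r ?c) x \<noteq> 0" by simp
    then have "(\<Sum>i\<in>{1..r}. \<Sum>j\<in>{1..r}. if x = root i j then ?c i j else 0) \<noteq> 0"
      unfolding count_RR .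
    then obtain i where i: "i \<in> {1..r}" "(\<Sum>j\<in>{1..r}. if x = root i j then ?c i j else 0) \<noteq> 0"
      using sum_nz by blast
    then obtain j where j: "j \<in> {1..r}" "(if x = root i j then ?c i j else 0) \<noteq> 0"
      using sum_nz by blast
    then have x: "x = root i j" and nz: "?c i j \<noteq> 0" by (auto split: if_splits)
    have "i + j \<le> r + 1"
    proof (rule ccontr)
      assume "\<not> i + j \<le> r + 1"
      then have "r + 1 < i + j" by simp
      with js_vanish[of i j] i j nz show False by simp
    qed
    then have "x = eps i - eps (i + j) \<and> 1 \<le> i \<and> i < i + j \<and> i + j \<le> r + 1"
      using i j x unfolding root_def by simp
    then show "x \<in> pos_roots_A r" unfolding pos_roots_A_def by blast
  qed
  have sm: "sum_mset (RR r ?c) = delta"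
  proof
    fix m
    show "sum_mset (RR r ?c) m = delta m"
    proof (cases "m = 0")
      case True then show ?thesis by (simp add: sum_RR_eval delta_eval a0)
    next
      case m0: False
      show ?thesis
      proof (cases "m \<le> r")
        case True
        have "sum_mset (RR r ?c) m = (\<Sum>j\<in>{1..r}. int (?c m j)) - (\<Sum>i\<in>{1..m-1}. int (?c i (m - i)))"
          unfolding sum_RR_eval using True m0 sum_shift[of m r "\<lambda>i j. int (?c i j)"] by simp
        also have "(\<Sum>j\<in>{1..r}. int (?c m j)) = (S ! (m - 1)) 1" using js_sum[of m] True m0 by simp
        also have "\<dots> = a m + (\<Sum>i\<in>{1..m-1}. int (?c i (m - i)))"
          using js_closed[of "m - 1" 1] True m0 by simp
        finally show ?thesis using True by (simp add: delta_eval)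
      next
        case False
        show ?thesis
        proof (cases "m = r + 1")
          case True
          have "(S ! r) 1 = a (r + 1) + (\<Sum>i\<in>{1..r}. int (?c i (1 + r - i)))"
            using js_closed[of r 1] by simp
          moreover have "(S ! r) 1 = (\<Sum>i\<in>{1..r+1}. a i)" using jsr by (simp add: bdef)
          moreover have "sum_mset (RR r ?c) m = - (\<Sum>i\<in>{1..r}. int (?c i (1 + r - i)))"
            unfolding sum_RR_eval using True sum_shift[of m r "\<lambda>i j. int (?c i j)"] by simp
          ultimately show ?thesis using True by (simp add: delta_eval)
        next
          case False2: False
          have "(\<Sum>i\<in>{1..r}. if i < m \<and> m - i \<le> r then int (?c i (m - i)) else 0) = 0"
          proof (rule sum.neutral, intro ballI)
            fix i assume i: "i \<in> {1..r}"
            show "(if i < m \<and> m - i \<le> r then int (?c i (m - i)) else 0) = 0"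
              using js_vanish[of i "m - i"] i False False2 by auto
          qed
          then show ?thesis using False False2 aZ by (simp add: sum_RR_eval delta_eval)
        qed
      qed
    qed
  qed
  show ?thesis unfolding js_roots vector_partitions_def using sub sm by simp
qed

end


lemma js_inj:
  assumes S: "S \<in> JS a b r" and S': "S' \<in> JS a b r" and eq: "js_to_roots S = js_to_roots S'"
  shows "S = S'"
proof -
  have RR: "RR r (throws S) = RR r (throws S')" using eq js_roots[OF S] js_roots[OF S'] by simp
  have th: "throws S i j = throws S' i j" if i: "i \<in> {1..r}" and j: "j \<ge> 1" for i j
  proof (cases "j \<le> r")
    case True then have jj: "j \<in> {1..r}" using j by simp
    show ?thesis using count_RR_root[OF i jj, of "throws S"] count_RR_root[OF i jj, of "throws S'"] RR by simp
  next
    case False then have ij: "r + 1 < i + j" using i by simp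
    show ?thesis using js_vanish[OF S i j ij] js_vanish[OF S' i j ij] by simp
  qed
  have "t \<le> r \<Longrightarrow> S ! t = S' ! t" for t
  proof (induction t)
    case 0 show ?case using js0[OF S] js0[OF S'] by simp
  next
    case (Suc t)
    then have IH: "S ! t = S' ! t" by simp
    have i: "Suc t \<in> {1..r}" using Suc.prems by simp
    show ?case
    proof
      fix k show "(S ! Suc t) k = (S' ! Suc t) k"
      proof (cases "k = 0")
        case True then show ?thesis using js_state[OF S Suc.prems] js_state[OF S' Suc.prems]
          by (simp add: juggling_state_def)
      next
        case False then have k: "k \<ge> 1" by simp
        show ?thesis using js_step[OF S i k] js_step[OF S' i k] th[OF i k] IH by simp
      qed
    qed
  qed
  then show ?thesis using js_len[OF S] js_len[OF S'] by (intro nth_equalityI) auto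
qed

context
  fixes M assumes M: "M \<in> P_A r delta"
begin

definition "cM i j = count M (root i j)"

lemma c_supp: assumes "cM i j \<noteq> 0" shows "1 \<le> i \<and> 1 \<le> j \<and> i + j \<le> r + 1"
proof -
  have "root i j \<in># M" using assms unfolding cM_def by (simp add: count_eq_zero_iff)
  then have "root i j \<in> pos_roots_A r" using M unfolding vector_partitions_def by blast
  then obtain p q where pq: "root i j = eps p - eps q" "1 \<le> p" "p < q" "q \<le> r + 1"
    unfolding pos_roots_A_def by blast
  show ?thesis
  proof (cases "j = 0")
    case True
    then have "eps p - eps q = 0" using pq(1) by (simp add: root_def)
    then have "(eps p - eps q) p = 0" by simp
    then show ?thesis using pq(3) by (simp add: eps_def)
  next
    case False
    have "i = p \<and> i + j = q" using eps_diff_inj[of i "i + j" p q] False pq by (simp add: root_def)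
    then show ?thesis using pq False by simp
  qed
qed

lemma M_eq: "M = RR r cM"
proof (rule multiset_eqI)
  fix x
  show "count M x = count (RR r cM) x"
  proof (cases "\<exists>p\<in>{1..r}. \<exists>q\<in>{1..r}. x = root p q")
    case True
    then obtain p q where "p \<in> {1..r}" "q \<in> {1..r}" "x = root p q" by blast
    then show ?thesis using count_RR_root[of p r q cM] by (simp add: cM_def)
  next
    case False
    have "count (RR r cM) x = 0" unfolding count_RR
      by (rule sum.neutral, intro ballI, rule sum.neutral) (use False in auto)
    moreover have "count M x = 0"
    proof (rule ccontr)
      assume "count M x \<noteq> 0"
      then have "x \<in># M" by (simp add: count_eq_zero_iff)
      then have "x \<in> pos_roots_A r" using M unfolding vector_partitions_def by blast
      then obtain p q where pq: "x = eps p - eps q" "1 \<le> p" "p < q" "q \<le> r + 1"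
        unfolding pos_roots_A_def by blast
      then have "x = root p (q - p)" "p \<in> {1..r}" "q - p \<in> {1..r}" by (auto simp: root_def)
      then show False using False by blast
    qed
    ultimately show ?thesis by simp
  qed
qed

lemma M_sum: "sum_mset (RR r cM) m = delta m"
  using M M_eq unfolding vector_partitions_def by simp

lemma st_closed: "t \<le> r \<Longrightarrow> k \<ge> 1 \<Longrightarrow> st a cM t k = a (k + t) + (\<Sum>i\<in>{1..t}. int (cM i (k + t - i)))"
  using closed_form[of r "st a cM" cM t k] by simp

lemma st_zero: "st a cM t 0 = 0"
  by (cases t) (simp_all add: a0)

lemma st_big: assumes "t \<le> r" "k > r + 1" shows "st a cM t k = 0"
proof -
  have "(\<Sum>i\<in>{1..t}. int (cM i (k + t - i))) = 0"
  proof (rule sum.neutral, intro ballI)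
    fix i assume i: "i \<in> {1..t}"
    show "int (cM i (k + t - i)) = 0"
    proof (rule ccontr)
      assume "int (cM i (k + t - i)) \<noteq> 0"
      then have "i + (k + t - i) \<le> r + 1" using c_supp[of i "k + t - i"] by simp
      then show False using i assms by simp
    qed
  qed
  then show ?thesis using st_closed[of t k] assms aZ by simp
qed

lemma st_r: "st a cM r = b"
proof
  fix k
  show "st a cM r k = b k"
  proof (cases "k = 0")
    case True then show ?thesis by (simp add: st_zero bdef)
  next
    case k0: False
    show ?thesis
    proof (cases "k = 1")
      case True
      have "sum_mset (RR r cM) (r + 1) = - (\<Sum>i\<in>{1..r}. int (cM i (r + 1 - i)))"
        unfolding sum_RR_eval using sum_shift[of "r + 1" r "\<lambda>i j. int (cM i j)"] by simp
      then have "(\<Sum>i\<in>{1..r}. int (cM i (r + 1 - i))) = (\<Sum>i\<in>{1..r+1}. a i) - a (r + 1)"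
        using M_sum[of "r + 1"] by (simp add: delta_eval)
      then show ?thesis using st_closed[of r 1] True by (simp add: bdef)
    next
      case False
      then have "k > 1" using k0 by simp
      have "(\<Sum>i\<in>{1..r}. int (cM i (k + r - i))) = 0"
      proof (rule sum.neutral, intro ballI)
        fix i assume i: "i \<in> {1..r}"
        show "int (cM i (k + r - i)) = 0"
        proof (rule ccontr)
          assume "int (cM i (k + r - i)) \<noteq> 0"
          then have "1 \<le> i \<and> 1 \<le> k + r - i \<and> i + (k + r - i) \<le> r + 1" by (intro c_supp) simp
          moreover have "i \<le> r" using i by simp
          ultimately show False using \<open>k > 1\<close> by arith
        qed
      qed
      then show ?thesis using st_closed[of r k] \<open>k > 1\<close> aZ by (simp add: bdef)
    qed
  qed
qed

lemma st_step: assumes i: "i \<in> {1..r}" shows "juggling_step (st a cM (i - 1)) (cM i) (st a cM i)"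
proof -
  have z: "cM i k = 0" if "k \<notin> {1..r}" for k
  proof (rule ccontr)
    assume "cM i k \<noteq> 0"
    then have "1 \<le> i \<and> 1 \<le> k \<and> i + k \<le> r + 1" by (rule c_supp)
    then show False using that i by simp
  qed
  have sub: "{k. cM i k \<noteq> 0} \<subseteq> {1..r}"
  proof
    fix k assume "k \<in> {k. cM i k \<noteq> 0}"
    then show "k \<in> {1..r}" using z[of k] by auto
  qed
  have fin: "finite {k. cM i k \<noteq> 0}" using sub by (rule finite_subset) simp
  have "(\<Sum>k\<in>{k. cM i k \<noteq> 0}. int (cM i k)) = (\<Sum>k\<in>{1..r}. int (cM i k))"
  proof (rule sum.mono_neutral_left)
    show "\<forall>k\<in>{1..r} - {k. cM i k \<noteq> 0}. int (cM i k) = 0" by simp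
  qed (use sub in simp_all)
  also have "\<dots> = a i + (\<Sum>i'\<in>{1..i-1}. int (cM i' (i - i')))"
  proof -
    have "sum_mset (RR r cM) i = (\<Sum>k\<in>{1..r}. int (cM i k)) - (\<Sum>i'\<in>{1..i-1}. int (cM i' (i - i')))"
      unfolding sum_RR_eval using i sum_shift[of i r "\<lambda>i j. int (cM i j)"] by simp
    then show ?thesis using M_sum[of i] i by (simp add: delta_eval)
  qed
  also have "\<dots> = st a cM (i - 1) 1"
  proof -
    have "i - 1 \<le> r" using i by auto
    from st_closed[OF this, of 1] show ?thesis using i by simp
  qed
  finally have sm: "(\<Sum>k\<in>{k. cM i k \<noteq> 0}. int (cM i k)) = st a cM (i - 1) 1" .
  have c0: "cM i 0 = 0" using z by simp
  have stp: "\<forall>k\<ge>1. st a cM i k = st a cM (i - 1) (k + 1) + int (cM i k)"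
  proof -
    obtain i' where i': "i = Suc i'" using i by (cases i) auto
    then show ?thesis by simp
  qed
  show ?thesis unfolding juggling_step_def using c0 fin sm stp by simp
qed

definition "Sm = map (st a cM) [0..<r+1]"

lemma Sm_nth: "t \<le> r \<Longrightarrow> Sm ! t = st a cM t"
  unfolding Sm_def by (simp del: upt_Suc)

lemma Sm_JS: "Sm \<in> JS a b r"
proof -
  have st_state: "juggling_state (st a cM t)" if "t \<le> r" for t
  proof -
    have "{k. st a cM t k \<noteq> 0} \<subseteq> {..r+1}" using st_big[OF that] by (auto simp: not_le[symmetric])
    then show ?thesis unfolding juggling_state_def using st_zero finite_subset by blast
  qed
  have "length Sm = r + 1" by (simp add: Sm_def)
  moreover have "Sm ! 0 = a" using Sm_nth[of 0] by simp
  moreover have "Sm ! r = b" using Sm_nth[of r] st_r by simp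
  moreover have "\<forall>i<length Sm. juggling_state (Sm ! i)"
    using st_state Sm_nth by (simp add: Sm_def)
  moreover have "\<forall>i\<in>{1..r}. \<exists>c. juggling_step (Sm ! (i - 1)) c (Sm ! i)"
  proof
    fix i assume i: "i \<in> {1..r}"
    then have "Sm ! (i - 1) = st a cM (i - 1)" "Sm ! i = st a cM i" using Sm_nth by auto
    then show "\<exists>c. juggling_step (Sm ! (i - 1)) c (Sm ! i)" using st_step[OF i] by auto
  qed
  ultimately show ?thesis unfolding JS_def by blast
qed

lemma Sm_roots: "js_to_roots Sm = M"
proof -
  have th: "throws Sm i j = cM i j" if i: "i \<in> {1..r}" and j: "j \<in> {1..r}" for i j
  proof -
    obtain i' where i': "i = Suc i'" using i by (cases i) auto
    show ?thesis using i j Sm_nth[of i] Sm_nth[of "i - 1"] unfolding throws_def i'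
      by simp
  qed
  have "RR r (throws Sm) = RR r cM" unfolding RR_def
    by (rule sum.cong, simp, rule sum.cong, simp) (simp add: th)
  then show ?thesis using js_roots[OF Sm_JS] M_eq by simp
qed

end

end

theorem mainTheorem3:
  fixes r :: nat and a b :: "nat \<Rightarrow> int"
  assumes "r \<ge> 1"
    and "a 0 = 0" and "\<forall>k > r + 1. a k = 0"
    and "b = (\<lambda>k. if k = 1 then (\<Sum>i\<in>{1..r+1}. a i) else 0)"
  shows "bij_betw js_to_roots (JS a b r)
           (P_A r ((\<Sum>i\<in>{1..r+1}. scale_vec (a i) (eps i)) - scale_vec (\<Sum>i\<in>{1..r+1}. a i) (eps (r + 1))))"
proof -
  interpret jug r a b using assms by unfold_locales auto
  have d: "(\<Sum>i\<in>{1..r+1}. scale_vec (a i) (eps i)) - scale_vec (\<Sum>i\<in>{1..r+1}. a i) (eps (r + 1)) = delta"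
    by (simp add: delta_def)
  show ?thesis unfolding d
  proof (rule bij_betw_imageI)
    show "inj_on js_to_roots (JS a b r)"
      by (rule inj_onI) (rule js_inj)
    show "js_to_roots ` JS a b r = P_A r delta"
    proof
      show "js_to_roots ` JS a b r \<subseteq> P_A r delta" using js_mem by blast
      show "P_A r delta \<subseteq> js_to_roots ` JS a b r"
      proof
        fix M assume hM: "M \<in> P_A r delta"
        have "M = js_to_roots (Sm M)" using Sm_roots[OF hM] by simp
        moreover have "Sm M \<in> JS a b r" by (rule Sm_JS[OF hM])
        ultimately show "M \<in> js_to_roots ` JS a b r" by blast
      qed
    qed
  qed
qed

end
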